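(* Let $N\ge 2$ agents communicate over a fixed, undirected, connected graph; let $\mathcal N_i\neq\emptyset$ be the neighbor set of agent $i$. Fix weights $w_1,w_2,w_3>0$, a sampling period $h>0$, constants $d>0$, $\nu>0$, arbitrary initial values $\delta^0_{i,1},\dot\delta^0_{i,1}\in\mathbb R$, and real numbers $\alpha_i^k$ ($i=1,\dots,N$, $k\ge1$) satisfying \[ |\alpha_i^k|\le d\,e^{-\nu k h}\qquad\text{for all } i \text{ and all } k\ge 1 . \] Let the sequences $\delta^k_{i,0},\dot\delta^k_{i,0},u^k_{i,0},\delta^k_{i,1},\dot\delta^k_{i,1}$ ($k\ge1$) be generated by the unconstrained one-step distributed MPC scheme described in the context. Then, for all sufficiently small $h>0$, there exist $r_h\in(0,1)$, $M_0^h>0$ and $\dot M_0^h>0$ such that for all $k\ge1$ and all $i,j\in\{1,\dots,N\}$, \[ |\delta_{i,0}^k-\delta_{j,0}^k|\le M_0^h\, r_h^k,\qquad |\dot\delta_{i,0}^k|\le \dot M_0^h\, r_h^k . \] In particular $\delta_{i,0}^k-\delta_{j,0}^k\to0$ and $\dot\delta_{i,0}^k\to0$ as $k\to\infty$.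
   Context: Unconstrained distributed MPC scheme with prediction horizon $K=1$ (virtual-time deviation coordination). For $k=1,2,\dots$ and each agent $i$, define recursively \[ \delta^k_{i,0}=\delta^{k-1}_{i,1}-\alpha_i^k,\qquad \dot\delta^k_{i,0}=\dot\delta^{k-1}_{i,1}, \] let $u^k_{i,0}$ be the unique minimizer over $u\in\mathbb R$ of \[ \frac{w_1}{|\mathcal N_i|}\sum_{j\in\mathcal N_i}\Big(\delta^k_{i,0}+h\dot\delta^k_{i,0}+\tfrac{h^2}{2}u-\delta^{k-1}_{j,1}\Big)^2+w_2\big(\dot\delta^k_{i,0}+hu\big)^2+w_3u^2, \] and set \[ \delta^k_{i,1}=\delta^k_{i,0}+h\dot\delta^k_{i,0}+\tfrac{h^2}{2}u^k_{i,0},\qquad \dot\delta^k_{i,1}=\dot\delta^k_{i,0}+h\,u^k_{i,0}. \] Equivalently, $u^k_{i,0}=-a^h\frac{1}{|\mathcal N_i|}\sum_{j\in\mathcal N_i}(\delta^{k-1}_{i,1}-\delta^{k-1}_{j,1})-b^h\dot\delta^{k-1}_{i,1}+a^h\alpha_i^k$, where \[ a^h=\frac{w_1h^2}{2\left(w_3+w_2h^2+w_1\frac{h^4}{4}\right)},\qquad b^h=\frac{w_2h+w_1\frac{h^3}{2}}{w_3+w_2h^2+w_1\frac{h^4}{4}}. \] Here $\delta$ denotes the deviation of an agent's virtual time from real time, $\dot\delta$ the deviation of its rate from $1$, and $\alpha_i^k$ a path-following correction term. *)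

theory Defs
  imports "HOL-Analysis.Analysis"
begin

text \<open>Agents are the elements of a finite type 'a; the communication graph is a
relation E (E i j: j is a neighbour of i).\<close>

definition nbrs :: "('a \<Rightarrow> 'a \<Rightarrow> bool) \<Rightarrow> 'a \<Rightarrow> 'a set" where
  "nbrs E i = {j. E i j}"

definition mpc_cost ::
  "real \<Rightarrow> real \<Rightarrow> real \<Rightarrow> real \<Rightarrow> 'a set \<Rightarrow> ('a \<Rightarrow> real) \<Rightarrow> real \<Rightarrow> real \<Rightarrow> real \<Rightarrow> real" where
  "mpc_cost w1 w2 w3 h Nb prev d0 dd0 u =
     w1 / real (card Nb) * (\<Sum>j\<in>Nb. (d0 + h * dd0 + h^2 / 2 * u - prev j)^2)
     + w2 * (dd0 + h * u)^2 + w3 * u^2"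

definition mpc_input ::
  "real \<Rightarrow> real \<Rightarrow> real \<Rightarrow> real \<Rightarrow> 'a set \<Rightarrow> ('a \<Rightarrow> real) \<Rightarrow> real \<Rightarrow> real \<Rightarrow> real" where
  "mpc_input w1 w2 w3 h Nb prev d0 dd0 =
     (THE u. \<forall>v. mpc_cost w1 w2 w3 h Nb prev d0 dd0 u \<le> mpc_cost w1 w2 w3 h Nb prev d0 dd0 v)"

text \<open>mpc_state ... k i = (delta^k_{i,1}, deltadot^k_{i,1}); k = 0 gives the initial values.\<close>
primrec mpc_state ::
  "real \<Rightarrow> real \<Rightarrow> real \<Rightarrow> real \<Rightarrow> ('a \<Rightarrow> 'a \<Rightarrow> bool) \<Rightarrow> (nat \<Rightarrow> 'a \<Rightarrow> real)
   \<Rightarrow> ('a \<Rightarrow> real) \<Rightarrow> ('a \<Rightarrow> real) \<Rightarrow> nat \<Rightarrow> 'a \<Rightarrow> real \<times> real" where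
  "mpc_state w1 w2 w3 h E alpha x0 v0 0 = (\<lambda>i. (x0 i, v0 i))"
| "mpc_state w1 w2 w3 h E alpha x0 v0 (Suc k) =
     (let S = mpc_state w1 w2 w3 h E alpha x0 v0 k in
      (\<lambda>i. let d0 = fst (S i) - alpha (Suc k) i;
               dd0 = snd (S i);
               u = mpc_input w1 w2 w3 h (nbrs E i) (\<lambda>j. fst (S j)) d0 dd0
           in (d0 + h * dd0 + h^2 / 2 * u, dd0 + h * u)))"

text \<open>delta^k_{i,0} and deltadot^k_{i,0} (meaningful for k \<ge> 1).\<close>
definition mpc_delta0 ::
  "real \<Rightarrow> real \<Rightarrow> real \<Rightarrow> real \<Rightarrow> ('a \<Rightarrow> 'a \<Rightarrow> bool) \<Rightarrow> (nat \<Rightarrow> 'a \<Rightarrow> real)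
   \<Rightarrow> ('a \<Rightarrow> real) \<Rightarrow> ('a \<Rightarrow> real) \<Rightarrow> nat \<Rightarrow> 'a \<Rightarrow> real" where
  "mpc_delta0 w1 w2 w3 h E alpha x0 v0 k i =
     fst (mpc_state w1 w2 w3 h E alpha x0 v0 (k - 1) i) - alpha k i"

definition mpc_ddelta0 ::
  "real \<Rightarrow> real \<Rightarrow> real \<Rightarrow> real \<Rightarrow> ('a \<Rightarrow> 'a \<Rightarrow> bool) \<Rightarrow> (nat \<Rightarrow> 'a \<Rightarrow> real)
   \<Rightarrow> ('a \<Rightarrow> real) \<Rightarrow> ('a \<Rightarrow> real) \<Rightarrow> nat \<Rightarrow> 'a \<Rightarrow> real" where
  "mpc_ddelta0 w1 w2 w3 h E alpha x0 v0 k i =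
     snd (mpc_state w1 w2 w3 h E alpha x0 v0 (k - 1) i)"

end

theory Submission imports Defs begin

locale grph =
  fixes E :: "'a::finite \<Rightarrow> 'a \<Rightarrow> bool"
  assumes symE: "\<And>i j. E i j \<Longrightarrow> E j i"
    and neE: "\<And>i. nbrs E i \<noteq> {}"
    and connE: "\<And>i j. E\<^sup>*\<^sup>* i j"
begin

definition deg :: "'a \<Rightarrow> real" where "deg i = real (card (nbrs E i))"
definition Lap :: "('a \<Rightarrow> real) \<Rightarrow> 'a \<Rightarrow> real" where
  "Lap f i = f i - (\<Sum>j\<in>nbrs E i. f j) / deg i"
definition ip :: "('a \<Rightarrow> real) \<Rightarrow> ('a \<Rightarrow> real) \<Rightarrow> real" where
  "ip f g = (\<Sum>i\<in>UNIV. deg i * f i * g i)"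
definition Qf :: "('a \<Rightarrow> real) \<Rightarrow> real" where "Qf f = ip f (Lap f)"

lemma deg_pos: "deg i > 0"
  using neE[of i] by (simp add: deg_def card_gt_0_iff)

lemma sum_nb: "(\<Sum>j\<in>nbrs E i. F j) = (\<Sum>j\<in>UNIV. if E i j then F j else 0)"
  unfolding nbrs_def by (simp add: sum.If_cases)

lemma swap_nb: "(\<Sum>i\<in>UNIV. \<Sum>j\<in>nbrs E i. F i j) = (\<Sum>i\<in>UNIV. \<Sum>j\<in>nbrs E i. F j i)"
proof -
  have "(\<Sum>i\<in>UNIV. \<Sum>j\<in>nbrs E i. F i j) = (\<Sum>i\<in>UNIV. \<Sum>j\<in>UNIV. if E i j then F i j else 0)"
    by (simp add: sum_nb)
  also have "\<dots> = (\<Sum>j\<in>UNIV. \<Sum>i\<in>UNIV. if E i j then F i j else 0)"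
    by (rule sum.swap)
  also have "\<dots> = (\<Sum>j\<in>UNIV. \<Sum>i\<in>UNIV. if E j i then F i j else 0)"
    by (intro sum.cong refl) (metis symE)
  also have "\<dots> = (\<Sum>i\<in>UNIV. \<Sum>j\<in>nbrs E i. F j i)"
    by (simp add: sum_nb)
  finally show ?thesis .
qed

lemma ip_Lap: "ip f (Lap g) = ip f g - (\<Sum>i\<in>UNIV. \<Sum>j\<in>nbrs E i. f i * g j)"
proof -
  have "ip f (Lap g) = (\<Sum>i\<in>UNIV. deg i * f i * g i - f i * (\<Sum>j\<in>nbrs E i. g j))"
    unfolding ip_def Lap_def using deg_pos
    by (intro sum.cong refl) (simp add: field_simps less_imp_neq[symmetric])
  then show ?thesis by (simp add: ip_def sum_subtractf sum_distrib_left)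
qed

lemma ip_comm: "ip f g = ip g f"
  unfolding ip_def by (intro sum.cong refl) simp

lemma Lap_selfadj: "ip f (Lap g) = ip (Lap f) g"
proof -
  have "(\<Sum>i\<in>UNIV. \<Sum>j\<in>nbrs E i. f i * g j) = (\<Sum>i\<in>UNIV. \<Sum>j\<in>nbrs E i. f j * g i)"
    by (rule swap_nb)
  then show ?thesis
    by (simp add: ip_Lap ip_comm[of "Lap f"] ip_comm[of f g] mult.commute)
qed

lemma Qf_sq: "Qf f = (\<Sum>i\<in>UNIV. \<Sum>j\<in>nbrs E i. (f i - f j)^2) / 2"
proof -
  have d: "(\<Sum>j\<in>nbrs E i. c) = deg i * c" for i and c :: real
    by (simp add: deg_def)
  have "(\<Sum>i\<in>UNIV. \<Sum>j\<in>nbrs E i. (f i - f j)^2)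
      = (\<Sum>i\<in>UNIV. \<Sum>j\<in>nbrs E i. f i ^2) - 2 * (\<Sum>i\<in>UNIV. \<Sum>j\<in>nbrs E i. f i * f j)
        + (\<Sum>i\<in>UNIV. \<Sum>j\<in>nbrs E i. f j ^2)"
    by (simp add: power2_diff sum.distrib sum_subtractf sum_distrib_left mult.assoc)
  also have "(\<Sum>i\<in>UNIV. \<Sum>j\<in>nbrs E i. f j ^2) = (\<Sum>i\<in>UNIV. \<Sum>j\<in>nbrs E i. f i ^2)"
    by (rule swap_nb)
  also have "(\<Sum>i\<in>UNIV. \<Sum>j\<in>nbrs E i. f i ^2) = ip f f"
    by (simp add: ip_def deg_def power2_eq_square mult.assoc)
  finally show ?thesis by (simp add: Qf_def ip_Lap)
qed

lemma Qf_nonneg: "Qf f \<ge> 0"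
  unfolding Qf_sq by (intro divide_nonneg_pos sum_nonneg) auto

lemma ip_sq_nonneg: "ip f f \<ge> 0"
  unfolding ip_def using deg_pos
  by (intro sum_nonneg) (simp add: less_imp_le mult.assoc)

lemma edge_bound: "E i j \<Longrightarrow> (f i - f j)^2 \<le> 2 * Qf f"
proof -
  assume e: "E i j"
  have "(f i - f j)^2 \<le> (\<Sum>j\<in>nbrs E i. (f i - f j)^2)"
    using e by (intro member_le_sum) (auto simp: nbrs_def)
  also have "\<dots> \<le> (\<Sum>i\<in>UNIV. \<Sum>j\<in>nbrs E i. (f i - f j)^2)"
    by (intro member_le_sum sum_nonneg) auto
  finally show ?thesis by (simp add: Qf_sq)
qed

lemma ip_add_left: "ip (\<lambda>i. f i + g i) h = ip f h + ip g h"
  unfolding ip_def by (simp add: algebra_simps sum.distrib)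
lemma ip_diff_left: "ip (\<lambda>i. f i - g i) h = ip f h - ip g h"
  unfolding ip_def by (simp add: algebra_simps sum_subtractf)
lemma ip_scale_left: "ip (\<lambda>i. c * f i) h = c * ip f h"
  unfolding ip_def by (simp add: algebra_simps sum_distrib_left)
lemma ip_minus_left: "ip (\<lambda>i. - f i) h = - ip f h"
  unfolding ip_def by (simp add: algebra_simps sum_negf)
lemma ip_add_right: "ip h (\<lambda>i. f i + g i) = ip h f + ip h g"
  unfolding ip_def by (simp add: algebra_simps sum.distrib)
lemma ip_diff_right: "ip h (\<lambda>i. f i - g i) = ip h f - ip h g"
  unfolding ip_def by (simp add: algebra_simps sum_subtractf)
lemma ip_scale_right: "ip h (\<lambda>i. c * f i) = c * ip h f"
  unfolding ip_def by (simp add: algebra_simps sum_distrib_left)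
lemma ip_minus_right: "ip h (\<lambda>i. - f i) = - ip h f"
  unfolding ip_def by (simp add: algebra_simps sum_negf)

lemmas ip_lin = ip_add_left ip_diff_left ip_scale_left ip_minus_left
  ip_add_right ip_diff_right ip_scale_right ip_minus_right

lemma Lap_add: "Lap (\<lambda>i. f i + g i) = (\<lambda>i. Lap f i + Lap g i)"
  unfolding Lap_def by (auto simp: sum.distrib add_divide_distrib)
lemma Lap_diff: "Lap (\<lambda>i. f i - g i) = (\<lambda>i. Lap f i - Lap g i)"
  unfolding Lap_def by (auto simp: sum_subtractf diff_divide_distrib)
lemma Lap_scale: "Lap (\<lambda>i. c * f i) = (\<lambda>i. c * Lap f i)"
  unfolding Lap_def by (auto simp: sum_distrib_left[symmetric] algebra_simps)
lemma Lap_minus: "Lap (\<lambda>i. - f i) = (\<lambda>i. - Lap f i)"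
  unfolding Lap_def by (auto simp: sum_negf)
lemma Lap_const: "Lap (\<lambda>i. c) = (\<lambda>i. 0)"
  unfolding Lap_def using neE by (auto simp: deg_def)

lemmas Lap_lin = Lap_add Lap_diff Lap_scale Lap_minus

lemma amgm: assumes "\<eta> > 0" shows "2 * ip f g \<le> \<eta> * ip f f + ip g g / \<eta>"
proof -
  have pt: "2 * (deg i * f i * g i) \<le> \<eta> * (deg i * f i * f i) + deg i * g i * g i / \<eta>" for i
  proof -
    have "0 \<le> deg i * (\<eta> * f i - g i)^2 / \<eta>"
      using deg_pos[of i] assms by simp
    also have "\<dots> = \<eta> * (deg i * f i * f i) + deg i * g i * g i / \<eta> - 2 * (deg i * f i * g i)"
      using assms by (simp add: field_simps power2_eq_square)
    finally show ?thesis by simp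
  qed
  have "2 * ip f g = (\<Sum>i\<in>UNIV. 2 * (deg i * f i * g i))"
    unfolding ip_def by (simp add: sum_distrib_left)
  also have "\<dots> \<le> (\<Sum>i\<in>UNIV. \<eta> * (deg i * f i * f i) + deg i * g i * g i / \<eta>)"
    by (intro sum_mono pt)
  also have "\<dots> = \<eta> * ip f f + ip g g / \<eta>"
    unfolding ip_def by (simp add: sum.distrib sum_distrib_left sum_divide_distrib)
  finally show ?thesis .
qed

lemma amgm_abs: assumes "\<eta> > 0" shows "2 * \<bar>ip f g\<bar> \<le> \<eta> * ip f f + ip g g / \<eta>"
  using amgm[OF assms, of f g] amgm[OF assms, of f "\<lambda>i. - g i"]
  by (simp add: ip_lin abs_if)

lemma amgm1: "2 * \<bar>ip f g\<bar> \<le> ip f f + ip g g"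
  using amgm_abs[of 1 f g] by simp

lemma LapLap_le: "ip (Lap f) (Lap f) \<le> 2 * Qf f"
proof -
  have "deg i * Lap f i * Lap f i \<le> (\<Sum>j\<in>nbrs E i. (f i - f j)^2)" for i
  proof -
    have eq: "Lap f i = (\<Sum>j\<in>nbrs E i. (f i - f j)) / deg i"
      unfolding Lap_def using deg_pos[of i] neE[of i] unfolding deg_def
      by (simp add: sum_subtractf diff_divide_distrib)
    have "(\<Sum>j\<in>nbrs E i. (f i - f j))^2 \<le> (\<Sum>j\<in>nbrs E i. (f i - f j)^2) * deg i"
      unfolding deg_def by (rule sum_squared_le_sum_of_squares)
    then show ?thesis using deg_pos[of i] unfolding eq
      by (simp add: power2_eq_square field_simps)
  qed
  then have "ip (Lap f) (Lap f) \<le> (\<Sum>i\<in>UNIV. \<Sum>j\<in>nbrs E i. (f i - f j)^2)"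
    unfolding ip_def by (intro sum_mono)
  then show ?thesis by (simp add: Qf_sq)
qed

lemma sq_diff_le: "((a::real) - b)^2 \<le> 2 * a^2 + 2 * b^2"
proof -
  have "0 \<le> (a + b)^2" by simp
  then show ?thesis by (simp add: power2_sum power2_diff)
qed

lemma Qf_le: "Qf f \<le> 2 * ip f f"
proof -
  have "(\<Sum>i\<in>UNIV. \<Sum>j\<in>nbrs E i. (f i - f j)^2) \<le> (\<Sum>i\<in>UNIV. \<Sum>j\<in>nbrs E i. 2 * f i ^2 + 2 * f j^2)"
    by (intro sum_mono) (rule sq_diff_le)
  also have "\<dots> = 2 * (\<Sum>i\<in>UNIV. \<Sum>j\<in>nbrs E i. f i ^2) + 2 * (\<Sum>i\<in>UNIV. \<Sum>j\<in>nbrs E i. f j ^2)"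
    by (simp add: sum.distrib sum_distrib_left mult.left_commute)
  also have "(\<Sum>i\<in>UNIV. \<Sum>j\<in>nbrs E i. f j ^2) = (\<Sum>i\<in>UNIV. \<Sum>j\<in>nbrs E i. f i ^2)"
    by (rule swap_nb)
  also have "(\<Sum>i\<in>UNIV. \<Sum>j\<in>nbrs E i. f i ^2) = ip f f"
    by (simp add: ip_def deg_def power2_eq_square mult.assoc)
  finally show ?thesis by (simp add: Qf_sq)
qed

lemma nq_scale: "ip (\<lambda>i. c * f i) (\<lambda>i. c * f i) = c^2 * ip f f"
  by (simp add: ip_lin power2_eq_square)

lemma nq_add_le: "ip (\<lambda>i. f i + g i) (\<lambda>i. f i + g i) \<le> 2 * ip f f + 2 * ip g g"
  using amgm1[of f g] by (simp add: ip_lin ip_comm[of g f])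

lemma nq_diff_le: "ip (\<lambda>i. f i - g i) (\<lambda>i. f i - g i) \<le> 2 * ip f f + 2 * ip g g"
  using amgm1[of f g] by (simp add: ip_lin ip_comm[of g f])

lemma point_le: "(f i)^2 \<le> ip f f"
proof -
  have "(f i)^2 \<le> deg i * f i * f i"
  proof -
    have "1 \<le> deg i" using neE[of i] unfolding deg_def
      by (simp add: Suc_le_eq card_gt_0_iff)
    then have "1 * (f i * f i) \<le> deg i * (f i * f i)"
      by (intro mult_right_mono) auto
    then show ?thesis by (simp add: power2_eq_square mult.assoc)
  qed
  also have "\<dots> \<le> ip f f" unfolding ip_def
    using deg_pos by (intro member_le_sum) (auto simp: less_imp_le mult.assoc)
  finally show ?thesis .
qed

lemma edge_abs: "E i j \<Longrightarrow> \<bar>f i - f j\<bar> \<le> sqrt (2 * Qf f)"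
  using edge_bound[of i j f] by (metis real_sqrt_abs real_sqrt_le_mono)

lemma path_bound: "(E ^^ n) i j \<Longrightarrow> \<bar>f i - f j\<bar> \<le> real n * sqrt (2 * Qf f)"
proof (induction n arbitrary: j)
  case 0
  then show ?case by simp
next
  case (Suc n)
  then obtain b where b1: "(E ^^ n) i b" and b2: "E b j" by auto
  have "\<bar>f i - f j\<bar> \<le> \<bar>f i - f b\<bar> + \<bar>f b - f j\<bar>" by simp
  also have "\<dots> \<le> real n * sqrt (2 * Qf f) + sqrt (2 * Qf f)"
    using Suc.IH[OF b1] edge_abs[OF b2, of f] by simp
  finally show ?case by (simp add: algebra_simps)
qed

lemma exK: "\<exists>K\<ge>0. \<forall>f i j. \<bar>f i - f j\<bar> \<le> K * sqrt (2 * Qf f)"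
proof -
  have "\<forall>p. \<exists>n. (E ^^ n) (fst p) (snd p)"
  proof
    fix p show "\<exists>n. (E ^^ n) (fst p) (snd p)" by (rule rtranclp_imp_relpowp[OF connE])
  qed
  then have "\<exists>nf. \<forall>p. (E ^^ nf p) (fst p) (snd p)" by (rule choice)
  then obtain nf where nf0: "\<forall>p. (E ^^ nf p) (fst p) (snd p)" by blast
  have nf: "(E ^^ nf p) (fst p) (snd p)" for p using nf0 by blast
  define K where "K = real (Max (range nf))"
  have "\<bar>f i - f j\<bar> \<le> K * sqrt (2 * Qf f)" for f i j
  proof -
    have "\<bar>f i - f j\<bar> \<le> real (nf (i, j)) * sqrt (2 * Qf f)"
      using path_bound[OF nf[of "(i,j)"]] by simp
    also have "\<dots> \<le> K * sqrt (2 * Qf f)"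
      unfolding K_def
    proof (rule mult_right_mono)
      have "nf (i, j) \<le> Max (range nf)" by (rule Max_ge) auto
      then show "real (nf (i, j)) \<le> real (Max (range nf))" by simp
    qed (simp add: Qf_nonneg)
    finally show ?thesis .
  qed
  moreover have "K \<ge> 0" unfolding K_def by simp
  ultimately show ?thesis by blast
qed

lemma ip_const_Lap: "ip (\<lambda>i. c) (Lap f) = 0"
proof -
  have "ip (\<lambda>i. c) (Lap f) = ip (Lap (\<lambda>i. c)) f" by (rule Lap_selfadj)
  then show ?thesis by (simp add: Lap_const ip_def)
qed

lemma gap: "\<exists>G>0. \<forall>f. Qf f \<le> G * ip (Lap f) (Lap f)"
proof -
  obtain K where K0: "K \<ge> 0" and K: "\<And>f i j. \<bar>f i - f j\<bar> \<le> K * sqrt (2 * Qf f)"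
    using exK by blast
  define Ds where "Ds = (\<Sum>i\<in>UNIV. deg i)"
  have Ds: "Ds > 0" unfolding Ds_def using deg_pos
    by (intro sum_pos) auto
  define T where "T = 2 * (K^2 + 1) * Ds"
  have "K^2 + 1 > 0" by (simp add: add_nonneg_pos)
  then have T: "T > 0" unfolding T_def using Ds by (intro mult_pos_pos) auto
  have "Qf f \<le> T * ip (Lap f) (Lap f)" for f
  proof -
    define i0 :: 'a where "i0 = undefined"
    define h where "h = (\<lambda>i. f i - f i0)"
    have Lh: "Lap h = Lap f" unfolding h_def by (simp add: Lap_diff Lap_const)
    have Qh: "Qf f = ip h (Lap f)"
      unfolding h_def Qf_def by (simp add: ip_lin ip_const_Lap)
    have pt: "deg i * h i * h i \<le> deg i * (2 * (K^2 + 1) * Qf f)" for i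
    proof -
      have "\<bar>h i\<bar> \<le> K * sqrt (2 * Qf f)" unfolding h_def by (rule K)
      then have "(h i)^2 \<le> (K * sqrt (2 * Qf f))^2"
        by (metis abs_ge_zero power2_abs power_mono)
      also have "\<dots> = K^2 * (2 * Qf f)" using Qf_nonneg[of f] by (simp add: power_mult_distrib)
      also have "\<dots> \<le> (K^2 + 1) * (2 * Qf f)" using Qf_nonneg[of f]
        by (intro mult_right_mono) auto
      finally have "h i * h i \<le> 2 * (K^2 + 1) * Qf f" by (simp add: power2_eq_square algebra_simps)
      then show ?thesis using deg_pos[of i]
        by (simp add: mult.assoc mult_left_mono)
    qed
    have hh: "ip h h \<le> T * Qf f"
    proof -
      have "ip h h \<le> (\<Sum>i\<in>UNIV. deg i * (2 * (K^2 + 1) * Qf f))"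
        unfolding ip_def by (intro sum_mono pt)
      also have "\<dots> = T * Qf f" unfolding T_def Ds_def
        by (simp add: sum_distrib_right[symmetric] sum_distrib_left[symmetric] mult.commute mult.left_commute)
      finally show ?thesis .
    qed
    have "2 * Qf f \<le> (1/T) * ip h h + ip (Lap f) (Lap f) / (1/T)"
      unfolding Qh using amgm[of "1/T" h "Lap f"] T by simp
    also have "\<dots> \<le> Qf f + T * ip (Lap f) (Lap f)"
      using hh T by (simp add: field_simps)
    finally show ?thesis by simp
  qed
  then show ?thesis using T by blast
qed

definition Vf :: "real \<Rightarrow> real \<Rightarrow> ('a \<Rightarrow> real) \<Rightarrow> ('a \<Rightarrow> real) \<Rightarrow> real" where
  "Vf ah c x u = ah * Qf x + ip u u + 2 * c * ip (Lap x) u"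

definition Bf :: "real \<Rightarrow> real \<Rightarrow> ('a \<Rightarrow> real) \<Rightarrow> ('a \<Rightarrow> real) \<Rightarrow> ('a \<Rightarrow> real) \<Rightarrow> ('a \<Rightarrow> real) \<Rightarrow> real" where
  "Bf ah c x1 u1 x2 u2 = ah * ip x1 (Lap x2) + ip u1 u2 + c * (ip (Lap x1) u2 + ip (Lap x2) u1)"

lemma V_expand:
  "Vf ah c (\<lambda>i. x1 i + t * x2 i) (\<lambda>i. u1 i + t * u2 i)
     = Vf ah c x1 u1 + 2 * t * Bf ah c x1 u1 x2 u2 + t^2 * Vf ah c x2 u2"
proof -
  have s1: "ip x2 (Lap x1) = ip x1 (Lap x2)"
    using Lap_selfadj[of x2 x1] ip_comm[of "Lap x2" x1] by simp
  have s2: "ip u2 u1 = ip u1 u2" by (rule ip_comm)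
  show ?thesis
    unfolding Vf_def Bf_def Qf_def
    by (simp add: Lap_lin ip_lin s1 s2 algebra_simps power2_eq_square)
qed

lemma ip_abs_bound: assumes "c \<ge> 0"
  shows "c * \<bar>ip (Lap x) u\<bar> \<le> c * Qf x + c * ip u u / 2"
proof -
  have "2 * \<bar>ip (Lap x) u\<bar> \<le> ip (Lap x) (Lap x) + ip u u" by (rule amgm1)
  also have "\<dots> \<le> 2 * Qf x + ip u u" using LapLap_le[of x] by simp
  finally have "\<bar>ip (Lap x) u\<bar> \<le> Qf x + ip u u / 2" by simp
  then have "c * \<bar>ip (Lap x) u\<bar> \<le> c * (Qf x + ip u u / 2)"
    using assms by (rule mult_left_mono)
  then show ?thesis by (simp add: distrib_left)
qed

lemma V_lower: assumes "c \<ge> 0"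
  shows "Vf ah c x u \<ge> (ah - 2 * c) * Qf x + (1 - c) * ip u u"
proof -
  have f1: "c * \<bar>ip (Lap x) u\<bar> \<le> c * Qf x + c * ip u u / 2" by (rule ip_abs_bound[OF assms])
  have f2: "c * (- ip (Lap x) u) \<le> c * \<bar>ip (Lap x) u\<bar>"
    using assms by (intro mult_left_mono) auto
  have e1: "(ah - 2 * c) * Qf x + (1 - c) * ip u u = ah * Qf x + ip u u - 2 * (c * Qf x) - c * ip u u"
    by (simp add: algebra_simps)
  have e2: "Vf ah c x u = ah * Qf x + ip u u - 2 * (c * (- ip (Lap x) u))"
    unfolding Vf_def by simp
  show ?thesis unfolding e1 e2 using f1 f2 by linarith
qed

lemma V_upper: assumes "c \<ge> 0"
  shows "Vf ah c x u \<le> (ah + 2 * c) * Qf x + (1 + c) * ip u u"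
proof -
  have f1: "c * \<bar>ip (Lap x) u\<bar> \<le> c * Qf x + c * ip u u / 2" by (rule ip_abs_bound[OF assms])
  have f2: "c * ip (Lap x) u \<le> c * \<bar>ip (Lap x) u\<bar>"
    using assms by (intro mult_left_mono) auto
  have e1: "(ah + 2 * c) * Qf x + (1 + c) * ip u u = ah * Qf x + ip u u + 2 * (c * Qf x) + c * ip u u"
    by (simp add: algebra_simps)
  have e2: "Vf ah c x u = ah * Qf x + ip u u + 2 * (c * ip (Lap x) u)"
    unfolding Vf_def by simp
  show ?thesis unfolding e1 e2 using f1 f2 by linarith
qed

lemma V_nonneg: assumes "c \<ge> 0" "c \<le> 1" "2 * c \<le> ah"
  shows "Vf ah c x u \<ge> 0"
proof -
  have "0 \<le> (ah - 2 * c) * Qf x + (1 - c) * ip u u"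
    using assms Qf_nonneg[of x] ip_sq_nonneg[of u] by simp
  also have "\<dots> \<le> Vf ah c x u" using V_lower assms by simp
  finally show ?thesis .
qed

lemma discr: fixes a b c :: real
  assumes "\<And>t. 0 \<le> a + 2 * t * b + t^2 * c" "c \<ge> 0"
  shows "b^2 \<le> a * c"
proof (cases "c = 0")
  case True
  show ?thesis
  proof (rule ccontr)
    assume "\<not> ?thesis"
    then have b0: "b \<noteq> 0" using True by simp
    have "0 \<le> a + 2 * (-(a+1)/(2*b)) * b + (-(a+1)/(2*b))^2 * c" by (rule assms(1))
    also have "2 * (-(a+1)/(2*b)) * b = -(a+1)" using b0 by simp
    finally show False using True by simp
  qed
next
  case False
  then have cp: "c > 0" using assms(2) by simp
  have "0 \<le> a + 2 * (-b/c) * b + (-b/c)^2 * c" by (rule assms(1))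
  also have "(-b/c)^2 * c = b^2 / c" using cp by (simp add: power2_eq_square)
  also have "2 * (-b/c) * b = - 2 * (b^2 / c)" by (simp add: power2_eq_square)
  finally have "b^2 / c \<le> a" by simp
  then show ?thesis using cp by (simp add: pos_divide_le_eq)
qed

lemma V_sqrt_triangle: assumes "c \<ge> 0" "c \<le> 1" "2 * c \<le> ah"
  shows "sqrt (Vf ah c (\<lambda>i. x1 i + x2 i) (\<lambda>i. u1 i + u2 i))
           \<le> sqrt (Vf ah c x1 u1) + sqrt (Vf ah c x2 u2)"
proof -
  let ?V1 = "Vf ah c x1 u1" and ?V2 = "Vf ah c x2 u2" and ?B = "Bf ah c x1 u1 x2 u2"
  have nn: "\<And>x u. Vf ah c x u \<ge> 0" using V_nonneg assms by blast
  have "?B^2 \<le> ?V1 * ?V2"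
  proof (rule discr)
    fix t
    show "0 \<le> ?V1 + 2 * t * ?B + t^2 * ?V2"
      using nn[of "\<lambda>i. x1 i + t * x2 i" "\<lambda>i. u1 i + t * u2 i"] by (simp add: V_expand)
  qed (rule nn)
  then have "sqrt (?B^2) \<le> sqrt (?V1 * ?V2)" by (rule real_sqrt_le_mono)
  then have "\<bar>?B\<bar> \<le> sqrt ?V1 * sqrt ?V2" by (simp add: real_sqrt_mult)
  then have "?B \<le> sqrt ?V1 * sqrt ?V2" by simp
  have "Vf ah c (\<lambda>i. x1 i + x2 i) (\<lambda>i. u1 i + u2 i) = ?V1 + 2 * ?B + ?V2"
    using V_expand[of ah c x1 1 x2 u1 u2] by simp
  also have "\<dots> \<le> (sqrt ?V1 + sqrt ?V2)^2"
    using \<open>?B \<le> sqrt ?V1 * sqrt ?V2\<close> nn[of x1 u1] nn[of x2 u2]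
    by (simp add: power2_sum real_sqrt_pow2)
  finally have "sqrt (Vf ah c (\<lambda>i. x1 i + x2 i) (\<lambda>i. u1 i + u2 i)) \<le> sqrt ((sqrt ?V1 + sqrt ?V2)^2)"
    by (rule real_sqrt_le_mono)
  moreover have "sqrt ?V1 + sqrt ?V2 \<ge> 0" using nn[of x1 u1] nn[of x2 u2] by simp
  ultimately show ?thesis by simp
qed

lemma step_identity:
  assumes g: "g = (\<lambda>i. ah * Lap x i + bh * u i)"
  shows "Vf ah c (\<lambda>i. x i + \<epsilon> * u i - \<epsilon>^2/2 * g i) (\<lambda>i. u i - \<epsilon> * g i)
    = Vf ah c x u
      + \<epsilon> * (- 2 * bh * ip u u - 2 * c * ah * ip (Lap x) (Lap x) - 2 * c * bh * ip (Lap x) u + 2 * c * Qf u)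
      + \<epsilon>^2 * (- ah * ip (Lap x) g - c * ip (Lap g) u
                 + Vf ah c (\<lambda>i. u i - \<epsilon>/2 * g i) (\<lambda>i. - g i))"
proof -
  define dx where "dx = (\<lambda>i. u i - \<epsilon>/2 * g i)"
  define du where "du = (\<lambda>i. - g i)"
  have e1: "(\<lambda>i. x i + \<epsilon> * u i - \<epsilon>^2/2 * g i) = (\<lambda>i. x i + \<epsilon> * dx i)"
    unfolding dx_def by (auto simp: algebra_simps power2_eq_square)
  have e2: "(\<lambda>i. u i - \<epsilon> * g i) = (\<lambda>i. u i + \<epsilon> * du i)"
    unfolding du_def by auto
  have Ldx: "Lap dx = (\<lambda>i. Lap u i - \<epsilon>/2 * Lap g i)"
    unfolding dx_def by (simp only: Lap_diff Lap_scale)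
  have f1: "ip x (Lap dx) = ip (Lap x) u - \<epsilon>/2 * ip (Lap x) g"
    unfolding Ldx ip_diff_right ip_scale_right by (simp add: Lap_selfadj)
  have f2: "ip u du = - (ah * ip (Lap x) u + bh * ip u u)"
    unfolding du_def g by (simp add: ip_lin ip_comm[of u "Lap x"])
  have f3: "ip (Lap x) du = - (ah * ip (Lap x) (Lap x) + bh * ip (Lap x) u)"
    unfolding du_def g by (simp add: ip_lin)
  have f4: "ip (Lap dx) u = Qf u - \<epsilon>/2 * ip (Lap g) u"
    unfolding Ldx Qf_def ip_diff_left ip_scale_left by (simp add: ip_comm[of "Lap u" u])
  have B: "2 * Bf ah c x u dx du = (- 2 * bh * ip u u - 2 * c * ah * ip (Lap x) (Lap x)
       - 2 * c * bh * ip (Lap x) u + 2 * c * Qf u) - \<epsilon> * (ah * ip (Lap x) g + c * ip (Lap g) u)"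
    unfolding Bf_def f1 f2 f3 f4 by (simp add: algebra_simps)
  have B2: "2 * \<epsilon> * Bf ah c x u dx du = \<epsilon> * (- 2 * bh * ip u u - 2 * c * ah * ip (Lap x) (Lap x)
       - 2 * c * bh * ip (Lap x) u + 2 * c * Qf u) - \<epsilon> * (\<epsilon> * (ah * ip (Lap x) g + c * ip (Lap g) u))"
  proof -
    have "2 * \<epsilon> * Bf ah c x u dx du = \<epsilon> * (2 * Bf ah c x u dx du)" by simp
    also have "\<dots> = \<epsilon> * ((- 2 * bh * ip u u - 2 * c * ah * ip (Lap x) (Lap x)
       - 2 * c * bh * ip (Lap x) u + 2 * c * Qf u) - \<epsilon> * (ah * ip (Lap x) g + c * ip (Lap g) u))"
      by (simp only: B)
    finally show ?thesis by (simp only: right_diff_distrib)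
  qed
  show ?thesis
    unfolding e1 e2 V_expand dx_def[symmetric] du_def[symmetric] B2
    by (simp add: algebra_simps power2_eq_square)
qed

lemma lin_aux1: fixes a b d e f g k m :: real
  assumes "2*a \<le> b + d" "e \<le> a" "f \<le> 2*g" "4*g + d \<le> k" "m \<le> b"
  shows "- (2*k) - 2*b + 2*e + 2*f \<le> - m - k"
  using assms by linarith

lemma lead_bound:
  assumes ah: "ah > 0" and bh: "bh > 0" and c: "c \<ge> 0" and cb: "4 * c + c * bh^2 / ah \<le> bh"
    and G: "G > 0" and gx: "Qf x \<le> G * ip (Lap x) (Lap x)"
  shows "- 2 * bh * ip u u - 2 * c * ah * ip (Lap x) (Lap x) - 2 * c * bh * ip (Lap x) u + 2 * c * Qf u
         \<le> - (c * ah / G) * Qf x - bh * ip u u"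
proof -
  define nL where "nL = ip (Lap x) (Lap x)"
  define S where "S = ip u u"
  define I where "I = ip (Lap x) u"
  have S0: "S \<ge> 0" unfolding S_def by (rule ip_sq_nonneg)
  have h1: "2 * \<bar>I\<bar> \<le> (ah/bh) * nL + S / (ah/bh)"
    unfolding I_def nL_def S_def using ah bh by (intro amgm_abs) simp
  have cbh: "c * bh \<ge> 0" using c bh by simp
  have h2: "(c * bh) * (2 * \<bar>I\<bar>) \<le> (c * bh) * ((ah/bh) * nL + S / (ah/bh))"
    using h1 cbh by (rule mult_left_mono)
  have e: "(c * bh) * ((ah/bh) * nL + S / (ah/bh)) = c * ah * nL + (c * bh^2 / ah) * S"
    using ah bh by (simp add: field_simps power2_eq_square)
  have h3: "(c * bh) * (- I) \<le> (c * bh) * \<bar>I\<bar>"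
    using cbh by (intro mult_left_mono) auto
  have h4: "c * Qf u \<le> c * (2 * S)"
    unfolding S_def using c Qf_le[of u] by (intro mult_left_mono)
  have h5: "(4 * c + c * bh^2 / ah) * S \<le> bh * S"
    using cb S0 by (rule mult_right_mono)
  have "c * ah / G \<ge> 0" using c ah G by simp
  then have h6: "(c * ah / G) * Qf x \<le> (c * ah / G) * (G * nL)"
    unfolding nL_def by (rule mult_left_mono[OF gx])
  have e6: "(c * ah / G) * (G * nL) = c * ah * nL" using G by simp
  have L: "- 2 * bh * S - 2 * c * ah * nL - 2 * c * bh * I + 2 * c * Qf u
      = - 2 * (bh * S) - 2 * (c * ah * nL) + 2 * ((c * bh) * (- I)) + 2 * (c * Qf u)"
    by (simp add: algebra_simps)
  have h5': "4 * (c * S) + (c * bh^2 / ah) * S \<le> bh * S"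
    using h5 by (simp add: algebra_simps)
  have h4': "c * Qf u \<le> 2 * (c * S)" using h4 by simp
  have h2': "2 * ((c * bh) * \<bar>I\<bar>) \<le> c * ah * nL + (c * bh^2 / ah) * S"
    using h2 e by (simp add: mult.left_commute)
  show ?thesis
    unfolding nL_def[symmetric] S_def[symmetric] I_def[symmetric] L
    using h2' h3 h4' h5' h6 e6 by (simp only: minus_mult_left[symmetric]) (rule lin_aux1; assumption)
qed

lemma nq_nonneg: "ip f f \<ge> 0" by (rule ip_sq_nonneg)

lemma rem_bound:
  assumes g: "g = (\<lambda>i. ah * Lap x i + bh * u i)"
    and ah0: "0 \<le> ah" and ahA: "ah \<le> A" and bh0: "0 \<le> bh" and bhB: "bh \<le> B2"
    and c0: "0 \<le> c" and c1: "c \<le> 1/2" and e0: "0 \<le> \<epsilon>" and e1: "\<epsilon> \<le> 1"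
  shows "- ah * ip (Lap x) g - c * ip (Lap g) u + Vf ah c (\<lambda>i. u i - \<epsilon>/2 * g i) (\<lambda>i. - g i)
         \<le> 5 * (A + 1) * (4 * A^2 + 2 * B2^2 + 4) * (Qf x + ip u u)"
proof -
  define P where "P = Qf x"
  define S where "S = ip u u"
  define T where "T = P + S"
  define K1 where "K1 = 4 * A^2 + 2 * B2^2"
  define nL where "nL = ip (Lap x) (Lap x)"
  define ng where "ng = ip g g"
  have P0: "P \<ge> 0" unfolding P_def by (rule Qf_nonneg)
  have S0: "S \<ge> 0" unfolding S_def by (rule nq_nonneg)
  have T0: "T \<ge> 0" unfolding T_def using P0 S0 by simp
  have A0: "A \<ge> 0" using ah0 ahA by simp
  have K10: "K1 \<ge> 0" unfolding K1_def by simp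
  have ng0: "ng \<ge> 0" unfolding ng_def by (rule nq_nonneg)
  have nL: "nL \<le> 2 * P" unfolding nL_def P_def by (rule LapLap_le)
  have ng: "ng \<le> K1 * T"
  proof -
    have "ng \<le> 2 * ip (\<lambda>i. ah * Lap x i) (\<lambda>i. ah * Lap x i) + 2 * ip (\<lambda>i. bh * u i) (\<lambda>i. bh * u i)"
      unfolding ng_def g by (rule nq_add_le)
    also have "\<dots> = 2 * (ah^2 * nL) + 2 * (bh^2 * S)"
      unfolding nL_def S_def by (simp only: nq_scale)
    also have "ah^2 * nL \<le> A^2 * (2 * P)"
      using nL ah0 ahA by (intro mult_mono power_mono) (auto simp: nL_def nq_nonneg)
    also have "bh^2 * S \<le> B2^2 * S"
      using bh0 bhB S0 by (intro mult_right_mono power_mono) auto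
    finally have "ng \<le> 4 * A^2 * P + 2 * B2^2 * S" by simp
    also have "\<dots> \<le> K1 * T" unfolding K1_def T_def using P0 S0
      by (simp add: algebra_simps add_mono mult_right_mono)
    finally show ?thesis .
  qed
  have r3: "- ah * ip (Lap x) g \<le> A * ((2 + K1) * T / 2)"
  proof -
    have "2 * \<bar>ip (Lap x) g\<bar> \<le> nL + ng" unfolding nL_def ng_def by (rule amgm1)
    also have "\<dots> \<le> (2 + K1) * T" using nL ng P0 S0 unfolding T_def by (simp add: algebra_simps)
    finally have i1: "\<bar>ip (Lap x) g\<bar> \<le> (2 + K1) * T / 2" by simp
    have "- ah * ip (Lap x) g \<le> ah * \<bar>ip (Lap x) g\<bar>"
      using ah0 mult_left_mono[of "- ip (Lap x) g" "\<bar>ip (Lap x) g\<bar>" ah] by simp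
    also have "\<dots> \<le> A * ((2 + K1) * T / 2)"
      using i1 ah0 ahA by (intro mult_mono) auto
    finally show ?thesis .
  qed
  have r4: "- c * ip (Lap g) u \<le> (4 * K1 * T + T) / 4"
  proof -
    have "2 * \<bar>ip (Lap g) u\<bar> \<le> ip (Lap g) (Lap g) + S" unfolding S_def by (rule amgm1)
    also have "ip (Lap g) (Lap g) \<le> 4 * ng"
      using LapLap_le[of g] Qf_le[of g] unfolding ng_def by simp
    finally have "2 * \<bar>ip (Lap g) u\<bar> \<le> 4 * K1 * T + T"
      using ng S0 unfolding T_def using P0 by simp
    then have i1: "\<bar>ip (Lap g) u\<bar> \<le> (4 * K1 * T + T) / 2" by simp
    have "- c * ip (Lap g) u \<le> c * \<bar>ip (Lap g) u\<bar>"
      using c0 mult_left_mono[of "- ip (Lap g) u" "\<bar>ip (Lap g) u\<bar>" c] by simp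
    also have "\<dots> \<le> (1/2) * ((4 * K1 * T + T) / 2)"
      using i1 c0 c1 by (intro mult_mono) auto
    finally show ?thesis by simp
  qed
  have r5: "Vf ah c (\<lambda>i. u i - \<epsilon>/2 * g i) (\<lambda>i. - g i) \<le> (A + 1) * (4 * T + K1 * T) + 3/2 * (K1 * T)"
  proof -
    define dx where "dx = (\<lambda>i. u i - \<epsilon>/2 * g i)"
    have du: "ip (\<lambda>i. - g i) (\<lambda>i. - g i) = ng" unfolding ng_def by (simp add: ip_lin)
    have "ip dx dx \<le> 2 * S + 2 * ip (\<lambda>i. \<epsilon>/2 * g i) (\<lambda>i. \<epsilon>/2 * g i)"
      unfolding dx_def S_def by (rule nq_diff_le)
    also have "ip (\<lambda>i. \<epsilon>/2 * g i) (\<lambda>i. \<epsilon>/2 * g i) = (\<epsilon>/2)^2 * ng"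
      unfolding ng_def by (rule nq_scale)
    also have "(\<epsilon>/2)^2 * ng \<le> (1/4) * ng"
    proof (rule mult_right_mono[OF _ ng0])
      have "\<epsilon>^2 \<le> 1" using e0 e1 by (simp add: power_le_one)
      then show "(\<epsilon>/2)^2 \<le> 1/4" by (simp add: power_divide)
    qed
    finally have ndx: "ip dx dx \<le> 2 * S + ng / 2" by simp
    have "Vf ah c dx (\<lambda>i. - g i) \<le> (ah + 2 * c) * Qf dx + (1 + c) * ng"
      using V_upper[OF c0, of ah dx "\<lambda>i. - g i"] du by simp
    also have "(ah + 2 * c) * Qf dx \<le> (A + 1) * (2 * (2 * S + ng / 2))"
      using Qf_le[of dx] ndx ah0 ahA c0 c1 Qf_nonneg[of dx]
      by (intro mult_mono) auto
    also have "(1 + c) * ng \<le> 3/2 * ng"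
      using c1 ng0 by (intro mult_right_mono) auto
    also have "(A + 1) * (2 * (2 * S + ng / 2)) = (A + 1) * (4 * S + ng)"
      by (simp add: algebra_simps)
    also have "(A + 1) * (4 * S + ng) \<le> (A + 1) * (4 * T + K1 * T)"
      using ng A0 S0 P0 unfolding T_def by (intro mult_left_mono) auto
    also have "3/2 * ng \<le> 3/2 * (K1 * T)" using ng by simp
    finally show ?thesis unfolding dx_def by simp
  qed
  have "- ah * ip (Lap x) g - c * ip (Lap g) u + Vf ah c (\<lambda>i. u i - \<epsilon>/2 * g i) (\<lambda>i. - g i)
      \<le> A * ((2 + K1) * T / 2) + (4 * K1 * T + T) / 4 + ((A + 1) * (4 * T + K1 * T) + 3/2 * (K1 * T))"
    using r3 r4 r5 by linarith
  also have "\<dots> = (5 * A + 3/2 * A * K1 + 7/2 * K1 + 17/4) * T"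
    by (simp add: field_simps)
  also have "\<dots> \<le> 5 * (A + 1) * (K1 + 4) * T"
  proof (rule mult_right_mono[OF _ T0])
    have p: "0 \<le> A * K1" using A0 K10 by simp
    have "5 * (A + 1) * (K1 + 4) - (5 * A + 3/2 * A * K1 + 7/2 * K1 + 17/4)
        = 7/2 * (A * K1) + 15 * A + 3/2 * K1 + 63/4" by (simp add: algebra_simps)
    then show "5 * A + 3/2 * A * K1 + 7/2 * K1 + 17/4 \<le> 5 * (A + 1) * (K1 + 4)"
      using p A0 K10 by linarith
  qed
  finally show ?thesis unfolding T_def P_def S_def K1_def by (simp add: add.assoc)
qed

lemma contraction:
  assumes g: "g = (\<lambda>i. ah * Lap x i + bh * u i)"
    and A: "A > 0" and ah1: "A/2 \<le> ah" and ah2: "ah \<le> A"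
    and B: "B > 0" and bh1: "B/2 \<le> bh" and bh2: "bh \<le> B2"
    and c0: "c > 0" and c1: "c \<le> 1/2" and cb: "4 * c + c * bh^2 / ah \<le> bh"
    and G: "G > 0" and gap: "\<And>f. Qf f \<le> G * ip (Lap f) (Lap f)"
    and e0: "0 < \<epsilon>" and e1: "\<epsilon> \<le> 1"
    and k0: "\<kappa> > 0" and k1: "\<kappa> \<le> c * A / (2 * G)" and k2: "\<kappa> \<le> B / 2"
    and eR: "\<epsilon> * (5 * (A + 1) * (4 * A^2 + 2 * B2^2 + 4)) \<le> \<kappa> / 2"
  shows "Vf ah c (\<lambda>i. x i + \<epsilon> * u i - \<epsilon>^2/2 * g i) (\<lambda>i. u i - \<epsilon> * g i)
         \<le> (1 - \<epsilon> * \<kappa> / (2 * (A + 2))) * Vf ah c x u"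
proof -
  define R where "R = 5 * (A + 1) * (4 * A^2 + 2 * B2^2 + 4)"
  define P where "P = Qf x"
  define S where "S = ip u u"
  define N where "N = P + S"
  define V where "V = Vf ah c x u"
  define Ld where "Ld = - 2 * bh * ip u u - 2 * c * ah * ip (Lap x) (Lap x) - 2 * c * bh * ip (Lap x) u + 2 * c * Qf u"
  define Rm where "Rm = - ah * ip (Lap x) g - c * ip (Lap g) u + Vf ah c (\<lambda>i. u i - \<epsilon>/2 * g i) (\<lambda>i. - g i)"
  have P0: "P \<ge> 0" unfolding P_def by (rule Qf_nonneg)
  have S0: "S \<ge> 0" unfolding S_def by (rule nq_nonneg)
  have N0: "N \<ge> 0" unfolding N_def using P0 S0 by simp
  have ahp: "ah > 0" using A ah1 by simp
  have bhp: "bh > 0" using B bh1 by simp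
  have id: "Vf ah c (\<lambda>i. x i + \<epsilon> * u i - \<epsilon>^2/2 * g i) (\<lambda>i. u i - \<epsilon> * g i) = V + \<epsilon> * Ld + \<epsilon>^2 * Rm"
    unfolding V_def Ld_def Rm_def by (rule step_identity[OF g])
  have Ld1: "Ld \<le> - (c * ah / G) * P - bh * S"
    unfolding Ld_def P_def S_def
    by (rule lead_bound[OF ahp bhp _ cb G gap]) (use c0 in simp)
  have "\<kappa> \<le> c * ah / G"
  proof -
    have "c * A / (2 * G) \<le> c * ah / G" using ah1 c0 G by (simp add: field_simps)
    then show ?thesis using k1 by simp
  qed
  then have "\<kappa> * P \<le> (c * ah / G) * P" using P0 by (rule mult_right_mono)
  moreover have "\<kappa> * S \<le> bh * S" using k2 bh1 S0 by (intro mult_right_mono) auto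
  ultimately have Ld2: "Ld \<le> - \<kappa> * N" using Ld1 unfolding N_def by (simp add: algebra_simps)
  have Rm1: "Rm \<le> R * N"
    unfolding Rm_def R_def N_def P_def S_def
    by (rule rem_bound[OF g]) (use ahp ah2 bhp bh2 c0 c1 e0 e1 in auto)
  have "\<epsilon> * Ld \<le> \<epsilon> * (- \<kappa> * N)" using Ld2 e0 by (intro mult_left_mono) auto
  moreover have "\<epsilon>^2 * Rm \<le> \<epsilon>^2 * (R * N)" using Rm1 by (simp add: mult_left_mono)
  moreover have "\<epsilon>^2 * (R * N) \<le> \<epsilon> * (\<kappa> / 2 * N)"
  proof -
    have "\<epsilon>^2 * (R * N) = \<epsilon> * ((\<epsilon> * R) * N)" by (simp add: power2_eq_square)
    also have "\<dots> \<le> \<epsilon> * (\<kappa> / 2 * N)"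
      using eR N0 e0 unfolding R_def by (intro mult_left_mono mult_right_mono) auto
    finally show ?thesis .
  qed
  ultimately have "Vf ah c (\<lambda>i. x i + \<epsilon> * u i - \<epsilon>^2/2 * g i) (\<lambda>i. u i - \<epsilon> * g i) \<le> V - \<epsilon> * \<kappa> / 2 * N"
    unfolding id by (simp add: algebra_simps)
  also have "V \<le> (A + 2) * N"
  proof -
    have "V \<le> (ah + 2 * c) * P + (1 + c) * S" unfolding V_def P_def S_def
      using V_upper c0 by simp
    also have "\<dots> \<le> (A + 2) * P + (A + 2) * S"
    proof -
      have a1: "ah + 2 * c \<le> A + 2" using ah2 c1 by simp
      have a2: "1 + c \<le> A + 2" using c1 A by simp
      show ?thesis using mult_right_mono[OF a1 P0] mult_right_mono[OF a2 S0] by linarith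
    qed
    finally show ?thesis unfolding N_def by (simp add: algebra_simps)
  qed
  then have "V / (A + 2) \<le> N" using A by (simp add: divide_le_eq mult.commute)
  then have "\<epsilon> * \<kappa> / 2 * (V / (A + 2)) \<le> \<epsilon> * \<kappa> / 2 * N"
    using e0 k0 by (intro mult_left_mono) auto
  then have "V - \<epsilon> * \<kappa> / 2 * N \<le> V - \<epsilon> * \<kappa> / 2 * (V / (A + 2))"
    by linarith
  also have "\<dots> = (1 - \<epsilon> * \<kappa> / (2 * (A + 2))) * V"
    using A by (simp add: field_simps)
  finally show ?thesis unfolding V_def .
qed

end

lemma mpc_cost_expand:
  assumes "finite Nb" "Nb \<noteq> {}"
  shows "mpc_cost w1 w2 w3 h Nb prev d0 dd0 u
    = w1 * (d0 + h * dd0 + h^2/2 * u)^2 - 2 * w1 * (d0 + h * dd0 + h^2/2 * u) * ((\<Sum>j\<in>Nb. prev j) / real (card Nb))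
      + w1 * (\<Sum>j\<in>Nb. (prev j)^2) / real (card Nb) + w2 * (dd0 + h * u)^2 + w3 * u^2"
proof -
  define a where "a = d0 + h * dd0 + h^2/2 * u"
  define n where "n = real (card Nb)"
  have n: "n > 0" unfolding n_def using assms by (simp add: card_gt_0_iff)
  have "(\<Sum>j\<in>Nb. (a - prev j)^2) = (\<Sum>j\<in>Nb. a^2 - 2 * a * prev j + (prev j)^2)"
    by (intro sum.cong refl) (simp add: power2_eq_square algebra_simps)
  also have "\<dots> = n * a^2 - 2 * a * (\<Sum>j\<in>Nb. prev j) + (\<Sum>j\<in>Nb. (prev j)^2)"
    unfolding n_def by (simp add: sum.distrib sum_subtractf sum_distrib_left)
  finally have e: "(\<Sum>j\<in>Nb. (a - prev j)^2) = n * a^2 - 2 * a * (\<Sum>j\<in>Nb. prev j) + (\<Sum>j\<in>Nb. (prev j)^2)" .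
  show ?thesis
    unfolding mpc_cost_def a_def[symmetric] n_def[symmetric] e using n
    by (simp add: field_simps)
qed

lemma mpc_input_eq:
  assumes "finite Nb" "Nb \<noteq> {}" "w1 > 0" "w2 > 0" "w3 > 0"
  shows "mpc_input w1 w2 w3 h Nb prev d0 dd0
    = - (w1 * h^2/2 * (d0 + h * dd0 - (\<Sum>j\<in>Nb. prev j) / real (card Nb)) + w2 * h * dd0)
        / (w3 + w2 * h^2 + w1 * h^4/4)"
proof -
  define m where "m = (\<Sum>j\<in>Nb. prev j) / real (card Nb)"
  define C where "C = w1 * (\<Sum>j\<in>Nb. (prev j)^2) / real (card Nb)"
  define D where "D = w3 + w2 * h^2 + w1 * h^4/4"
  define c0 where "c0 = d0 + h * dd0"
  define us where "us = - (w1 * h^2/2 * (c0 - m) + w2 * h * dd0) / D"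
  have D: "D > 0" unfolding D_def using assms by (simp add: add_pos_nonneg)
  have Dus: "D * us = - (w1 * h^2/2 * (c0 - m) + w2 * h * dd0)" unfolding us_def using D by simp
  define F where "F = (\<lambda>u. w1 * (c0 + h^2/2 * u)^2 - 2 * w1 * (c0 + h^2/2 * u) * m + C
      + w2 * (dd0 + h * u)^2 + w3 * u^2)"
  have cost: "mpc_cost w1 w2 w3 h Nb prev d0 dd0 u = F u" for u
    unfolding F_def C_def m_def c0_def using mpc_cost_expand[OF assms(1,2)] by simp
  have h4: "h^4 = h^2 * h^2" by (simp add: power_add[symmetric])
  have key: "F u - F us = D * (u - us)^2" for u
  proof -
    have "F u - F us = (u - us) * (2 * (w1 * h^2/2 * (c0 - m) + w2 * h * dd0) + D * (u + us))"
      unfolding F_def D_def h4 by (simp add: field_simps power2_eq_square)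
    also have "\<dots> = (u - us) * (- 2 * (D * us) + D * (u + us))" using Dus by simp
    also have "\<dots> = D * (u - us)^2" by (simp add: algebra_simps power2_eq_square)
    finally show ?thesis .
  qed
  have "mpc_input w1 w2 w3 h Nb prev d0 dd0 = us"
    unfolding mpc_input_def cost
  proof (rule the_equality)
    show "\<forall>v. F us \<le> F v" using key D by (smt (verit) mult_nonneg_nonneg zero_le_power2)
  next
    fix y assume "\<forall>v. F y \<le> F v"
    then have "F y \<le> F us" by blast
    then have "D * (y - us)^2 \<le> 0" using key[of y] by simp
    then have "(y - us)^2 \<le> 0" using D by (simp add: mult_le_0_iff)
    then show "y = us" by simp
  qed
  then show ?thesis unfolding us_def D_def c0_def m_def by simp
qed


context grph begin

lemma state_step:
  fixes w1 w2 w3 h den ah bh \<epsilon> :: real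
  assumes w: "w1 > 0" "w2 > 0" "w3 > 0" and h: "h > 0"
    and den: "den = w3 + w2 * h^2 + w1 * h^4/4" and ah: "ah = w1 / (2 * den)"
    and bh: "bh = (w2 + w1 * h^2/2) / den" and eps: "\<epsilon> = h^2"
    and X: "X = (\<lambda>k i. fst (mpc_state w1 w2 w3 h E alpha x0 v0 k i))"
    and U: "U = (\<lambda>k i. snd (mpc_state w1 w2 w3 h E alpha x0 v0 k i) / h)"
  shows "X (Suc k) i = X k i + \<epsilon> * U k i - \<epsilon>^2/2 * (ah * Lap (X k) i + bh * U k i)
            - (1 - \<epsilon>^2 * ah / 2) * alpha (Suc k) i"
    and "U (Suc k) i = U k i - \<epsilon> * (ah * Lap (X k) i + bh * U k i) + \<epsilon> * ah * alpha (Suc k) i"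
proof -
  have fin: "finite (nbrs E i)" by simp
  have dpos: "den > 0" unfolding den using w by (simp add: add_pos_nonneg)
  define xs where "xs = X k i"
  define vs where "vs = snd (mpc_state w1 w2 w3 h E alpha x0 v0 k i)"
  define al where "al = alpha (Suc k) i"
  define lx where "lx = Lap (X k) i"
  have avg: "(\<Sum>j\<in>nbrs E i. fst (mpc_state w1 w2 w3 h E alpha x0 v0 k j)) / real (card (nbrs E i)) = xs - lx"
    unfolding lx_def xs_def Lap_def X deg_def by simp
  have Uk: "U k i = vs / h" unfolding U vs_def by simp
  define uu where "uu = mpc_input w1 w2 w3 h (nbrs E i) (\<lambda>j. fst (mpc_state w1 w2 w3 h E alpha x0 v0 k j)) (xs - al) vs"
  have uu: "uu = - (w1 * h^2/2 * (xs - al + h * vs - (xs - lx)) + w2 * h * vs) / den"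
    unfolding uu_def den using mpc_input_eq[OF fin neE w] avg by simp
  have st: "mpc_state w1 w2 w3 h E alpha x0 v0 (Suc k) i = (xs - al + h * vs + h^2/2 * uu, vs + h * uu)"
    unfolding uu_def xs_def vs_def al_def X by (simp add: Let_def)
  have h4: "h^4 = h^2 * h^2" by (simp add: power_add[symmetric])
  have key1: "h^2/2 * uu = - (\<epsilon>^2/2) * (ah * lx + bh * (vs / h)) + (\<epsilon>^2 * ah / 2) * al"
  proof -
    have dn: "den \<noteq> 0" using dpos by simp
    have "h^2/2 * uu = - (h^2/2) * (w1 * h^2/2 * (lx - al) + (w2 * h + w1 * h^3/2) * vs) / den"
    proof -
      have num: "w1 * h^2/2 * (xs - al + h * vs - (xs - lx)) + w2 * h * vs
          = w1 * h^2/2 * (lx - al) + (w2 * h + w1 * h^3/2) * vs"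
        by (simp add: field_simps power3_eq_cube power2_eq_square)
      show ?thesis unfolding uu num using dn by (simp add: field_simps)
    qed
    also have "\<dots> = - (\<epsilon>^2/2) * (ah * lx + bh * (vs / h)) + (\<epsilon>^2 * ah / 2) * al"
      unfolding ah bh eps using dn h
      by (simp add: field_simps power2_eq_square power3_eq_cube)
    finally show ?thesis .
  qed
  show "X (Suc k) i = X k i + \<epsilon> * U k i - \<epsilon>^2/2 * (ah * Lap (X k) i + bh * U k i)
            - (1 - \<epsilon>^2 * ah / 2) * alpha (Suc k) i"
  proof -
    have "X (Suc k) i = xs - al + h * vs + h^2/2 * uu" using st unfolding X by simp
    also have "h^2/2 * uu = - (\<epsilon>^2/2) * (ah * lx + bh * (vs / h)) + (\<epsilon>^2 * ah / 2) * al"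
      using key1 .
    finally show ?thesis
      unfolding xs_def[symmetric] lx_def[symmetric] al_def[symmetric] Uk
      using h by (simp add: eps power2_eq_square algebra_simps)
  qed
  show "U (Suc k) i = U k i - \<epsilon> * (ah * Lap (X k) i + bh * U k i) + \<epsilon> * ah * alpha (Suc k) i"
  proof -
    have "U (Suc k) i = (vs + h * uu) / h" using st unfolding U by simp
    also have "\<dots> = vs / h + uu" using h by (simp add: field_simps)
    also have "uu = - \<epsilon> * (ah * lx + bh * (vs / h)) + \<epsilon> * ah * al"
    proof -
      have "h^2/2 * uu = h^2/2 * (- \<epsilon> * (ah * lx + bh * (vs / h)) + \<epsilon> * ah * al)"
        unfolding key1 by (simp add: eps power2_eq_square algebra_simps)
      then show ?thesis using h by simp
    qed
    finally show ?thesis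
      unfolding lx_def[symmetric] al_def[symmetric] Uk by (simp add: algebra_simps)
  qed
qed

end


lemma geo_rec:
  fixes W :: "nat \<Rightarrow> real"
  assumes W0: "\<And>k. W k \<ge> 0" and rec: "\<And>k. W (Suc k) \<le> \<sigma> * W k + Fc * \<rho>^(Suc k)"
    and s0: "0 \<le> \<sigma>" and s1: "\<sigma> < 1" and r0: "0 < \<rho>" and r1: "\<rho> < 1" and F0: "Fc \<ge> 0"
  shows "\<exists>r M. 0 < r \<and> r < 1 \<and> \<rho> \<le> r \<and> M > 0 \<and> (\<forall>k. W k \<le> M * r^k)"
proof -
  define r where "r = (1 + max \<sigma> \<rho>) / 2"
  have r0': "0 < r" "r < 1" "\<rho> \<le> r" "\<sigma> < r" unfolding r_def using s0 s1 r0 r1 by auto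
  define M where "M = W 0 + Fc * r / (r - \<sigma>) + 1"
  have FM: "Fc * r / (r - \<sigma>) \<ge> 0" using F0 r0' by simp
  have M0: "M > 0" unfolding M_def using W0[of 0] FM by simp
  have key: "\<sigma> * M + Fc * r \<le> M * r"
  proof -
    have "Fc * r / (r - \<sigma>) \<le> M" unfolding M_def using W0[of 0] by simp
    then have "Fc * r \<le> M * (r - \<sigma>)" using r0' by (simp add: divide_le_eq)
    then show ?thesis by (simp add: algebra_simps)
  qed
  have "W k \<le> M * r^k" for k
  proof (induction k)
    case 0 then show ?case unfolding M_def using FM by simp
  next
    case (Suc k)
    have "W (Suc k) \<le> \<sigma> * W k + Fc * \<rho>^(Suc k)" by (rule rec)
    also have "\<dots> \<le> \<sigma> * (M * r^k) + Fc * r^(Suc k)"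
      using Suc.IH s0 F0 r0 r0' by (intro add_mono mult_left_mono power_mono) auto
    also have "\<dots> = r^k * (\<sigma> * M + Fc * r)" by (simp add: algebra_simps)
    also have "\<dots> \<le> r^k * (M * r)" using key r0' by (intro mult_left_mono) auto
    also have "\<dots> = M * r^(Suc k)" by (simp add: algebra_simps)
    finally show ?case .
  qed
  then show ?thesis using r0' M0 by blast
qed


context grph begin

lemma param_bounds:
  fixes w1 w2 w3 h den ah bh :: real
  assumes w: "w1 > 0" "w2 > 0" "w3 > 0" and h: "h > 0"
    and e1: "h^2 \<le> 1" and e2: "h^2 \<le> w3 / (w2 + w1)"
    and den: "den = w3 + w2 * h^2 + w1 * h^4/4" and ah: "ah = w1 / (2 * den)"
    and bh: "bh = (w2 + w1 * h^2/2) / den"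
  shows "w1 / (2 * w3) / 2 \<le> ah" "ah \<le> w1 / (2 * w3)"
    "w2 / w3 / 2 \<le> bh" "bh \<le> (w2 + w1) / w3"
proof -
  define e where "e = h^2"
  have e0: "e > 0" unfolding e_def using h by simp
  have h4: "h^4 = e^2" unfolding e_def by (simp add: power_mult[symmetric])
  have ee: "e^2 \<le> e" using e0 e1 unfolding e_def[symmetric] by (simp add: power2_eq_square mult_le_cancel_right1)
  have "(w2 + w1) * e \<le> w3" using e2 w unfolding e_def[symmetric] by (simp add: le_divide_eq mult.commute)
  moreover have "w1 * e^2 / 4 \<le> w1 * e" using ee w e0 by (simp add: mult_left_mono)
  ultimately have dup: "den \<le> 2 * w3" unfolding den h4 e_def[symmetric] by (simp add: algebra_simps)
  have dlo: "w3 \<le> den" unfolding den h4 e_def[symmetric] using w e0 by simp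
  have dpos: "den > 0" using dlo w by simp
  show "w1 / (2 * w3) / 2 \<le> ah" unfolding ah using w dup dpos
    by (simp add: field_simps)
  show "ah \<le> w1 / (2 * w3)" unfolding ah using w dlo dpos
    by (simp add: field_simps mult_left_mono)
  have n1: "w2 \<le> w2 + w1 * h^2/2" using w h by simp
  have n2: "w2 + w1 * h^2/2 \<le> w2 + w1" using w e1 by simp
  show "w2 / w3 / 2 \<le> bh"
  proof -
    have "w2 / w3 / 2 = w2 / (2 * w3)" by simp
    also have "\<dots> \<le> (w2 + w1 * h^2/2) / (2 * w3)" using n1 w by (simp add: divide_right_mono)
    also have "\<dots> \<le> (w2 + w1 * h^2/2) / den" using dup dpos n1 w
      by (intro divide_left_mono) auto
    finally show ?thesis unfolding bh .
  qed
  show "bh \<le> (w2 + w1) / w3"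
  proof -
    have "bh \<le> (w2 + w1) / den" unfolding bh using n2 dpos by (simp add: divide_right_mono)
    also have "\<dots> \<le> (w2 + w1) / w3" using dlo w by (intro divide_left_mono) auto
    finally show ?thesis .
  qed
qed

end


context grph begin

lemma forcing_bound:
  fixes ah c A \<epsilon> D :: real
  assumes ah0: "0 \<le> ah" and ahA: "ah \<le> A" and c0: "0 \<le> c" and c1: "c \<le> 1/2"
    and e0: "0 \<le> \<epsilon>" and e1: "\<epsilon> \<le> 1" and D: "D \<ge> 0"
    and a: "\<And>i. \<bar>a i\<bar> \<le> D"
  shows "Vf ah c (\<lambda>i. - (1 - \<epsilon>^2 * ah / 2) * a i) (\<lambda>i. \<epsilon> * ah * a i)
     \<le> (A + 2) * (2 * (1 + A)^2 + A^2) * (\<Sum>i\<in>UNIV. deg i) * D^2"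
proof -
  define cx where "cx = - (1 - \<epsilon>^2 * ah / 2)"
  define cu where "cu = \<epsilon> * ah"
  define Ds where "Ds = (\<Sum>i\<in>UNIV. deg i)"
  have A0: "A \<ge> 0" using ah0 ahA by simp
  have na: "ip a a \<le> Ds * D^2"
  proof -
    have "ip a a \<le> (\<Sum>i\<in>UNIV. deg i * D^2)" unfolding ip_def
    proof (intro sum_mono)
      fix i
      have "a i * a i \<le> D^2" using a[of i] by (metis abs_le_square_iff power2_eq_square abs_of_nonneg D)
      then show "deg i * a i * a i \<le> deg i * D^2" using deg_pos[of i]
        by (simp add: mult.assoc mult_left_mono)
    qed
    also have "\<dots> = Ds * D^2" unfolding Ds_def by (simp add: sum_distrib_right)
    finally show ?thesis .
  qed
  have na0: "ip a a \<ge> 0" by (rule nq_nonneg)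
  have y0: "0 \<le> \<epsilon>^2 * ah / 2" using e0 ah0 by simp
  have y1: "\<epsilon>^2 * ah / 2 \<le> A" 
  proof -
    have "\<epsilon>^2 \<le> 1" using e0 e1 by (simp add: power_le_one)
    then have "\<epsilon>^2 * ah \<le> 1 * A" using ah0 ahA by (intro mult_mono) auto
    then show ?thesis using A0 by simp
  qed
  have cx2: "cx^2 \<le> (1 + A)^2"
  proof -
    have "\<bar>cx\<bar> \<le> 1 + A" unfolding cx_def using y0 y1 by simp
    then show ?thesis by (metis abs_ge_zero power2_abs power_mono)
  qed
  have cu2: "cu^2 \<le> A^2"
  proof -
    have "cu \<le> A" unfolding cu_def using e0 e1 ah0 ahA mult_mono[of \<epsilon> 1 ah A] by simp
    moreover have "0 \<le> cu" unfolding cu_def using e0 ah0 by simp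
    ultimately show ?thesis by (simp add: power_mono)
  qed
  have "Vf ah c (\<lambda>i. cx * a i) (\<lambda>i. cu * a i) \<le> (ah + 2 * c) * Qf (\<lambda>i. cx * a i) + (1 + c) * ip (\<lambda>i. cu * a i) (\<lambda>i. cu * a i)"
    using V_upper[OF c0] by blast
  also have "\<dots> \<le> (A + 2) * (2 * ip (\<lambda>i. cx * a i) (\<lambda>i. cx * a i)) + (A + 2) * ip (\<lambda>i. cu * a i) (\<lambda>i. cu * a i)"
  proof (rule add_mono)
    show "(ah + 2 * c) * Qf (\<lambda>i. cx * a i) \<le> (A + 2) * (2 * ip (\<lambda>i. cx * a i) (\<lambda>i. cx * a i))"
      using ahA c1 Qf_le Qf_nonneg A0 by (intro mult_mono) auto
    show "(1 + c) * ip (\<lambda>i. cu * a i) (\<lambda>i. cu * a i) \<le> (A + 2) * ip (\<lambda>i. cu * a i) (\<lambda>i. cu * a i)"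
      using c1 A0 nq_nonneg by (intro mult_right_mono) auto
  qed
  also have "\<dots> = (A + 2) * (2 * cx^2 + cu^2) * ip a a" by (simp add: nq_scale algebra_simps)
  also have "\<dots> \<le> (A + 2) * (2 * (1 + A)^2 + A^2) * (Ds * D^2)"
    using cx2 cu2 na na0 A0 by (intro mult_mono) auto
  finally show ?thesis unfolding cx_def cu_def Ds_def by (simp add: mult.assoc)
qed

end


lemma lim_from_bound:
  fixes f :: "nat \<Rightarrow> real"
  assumes b: "\<forall>k\<ge>1. \<bar>f k\<bar> \<le> M * r^k" and r: "0 < r" "r < 1"
  shows "f \<longlonglongrightarrow> 0"
proof (rule Lim_null_comparison[where g = "\<lambda>k. M * r^k"])
  show "\<forall>\<^sub>F k in sequentially. norm (f k) \<le> M * r^k"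
    unfolding eventually_sequentially using b by auto
  have "(\<lambda>k. r^k) \<longlonglongrightarrow> 0" using r by (intro LIMSEQ_power_zero) simp
  then have "(\<lambda>k. M * r^k) \<longlonglongrightarrow> M * 0" by (intro tendsto_mult tendsto_const)
  then show "(\<lambda>k. M * r^k) \<longlonglongrightarrow> 0" by simp
qed

context grph begin

lemma main_h:
  fixes w1 w2 w3 d \<nu> h G A B B2 c \<kappa> :: real
  assumes w: "w1 > 0" "w2 > 0" "w3 > 0" and d: "d > 0" and nu: "\<nu> > 0" and h: "h > 0"
    and G: "G > 0" and gapG: "\<And>f. Qf f \<le> G * ip (Lap f) (Lap f)"
    and A: "A = w1 / (2 * w3)" and B: "B = w2 / w3" and B2: "B2 = (w2 + w1) / w3"
    and c0: "c > 0" and c1: "c \<le> 1/2" and c2: "c \<le> A/8" and c3: "c * (4 + 2 * B2^2 / A) \<le> B/2"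
    and k0: "\<kappa> > 0" and k1: "\<kappa> \<le> c * A / (2 * G)" and k2: "\<kappa> \<le> B / 2"
    and e1: "h^2 \<le> 1" and e2: "h^2 \<le> w3 / (w2 + w1)"
    and e3: "h^2 * (5 * (A + 1) * (4 * A^2 + 2 * B2^2 + 4)) \<le> \<kappa> / 2"
    and e4: "h^2 * \<kappa> < A + 2"
    and al: "\<forall>i. \<forall>k\<ge>1. \<bar>alpha k i\<bar> \<le> d * exp (- \<nu> * real k * h)"
  shows "(\<exists>r M Md. 0 < r \<and> r < 1 \<and> M > 0 \<and> Md > 0 \<and>
               (\<forall>k\<ge>1. \<forall>i j.
                  \<bar>mpc_delta0 w1 w2 w3 h E alpha x0 v0 k i - mpc_delta0 w1 w2 w3 h E alpha x0 v0 k j\<bar>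
                    \<le> M * r ^ k \<and>
                  \<bar>mpc_ddelta0 w1 w2 w3 h E alpha x0 v0 k i\<bar> \<le> Md * r ^ k)) \<and>
            (\<forall>i j. (\<lambda>k. mpc_delta0 w1 w2 w3 h E alpha x0 v0 k i - mpc_delta0 w1 w2 w3 h E alpha x0 v0 k j)
                      \<longlonglongrightarrow> 0) \<and>
            (\<forall>i. (\<lambda>k. mpc_ddelta0 w1 w2 w3 h E alpha x0 v0 k i) \<longlonglongrightarrow> 0)"
proof -
  define \<epsilon> where "\<epsilon> = h^2"
  define den where "den = w3 + w2 * h^2 + w1 * h^4/4"
  define ah where "ah = w1 / (2 * den)"
  define bh where "bh = (w2 + w1 * h^2/2) / den"
  have pb: "A/2 \<le> ah" "ah \<le> A" "B/2 \<le> bh" "bh \<le> B2"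
    using param_bounds[OF w h e1 e2 den_def ah_def bh_def] unfolding A B B2 by auto
  have Ap: "A > 0" unfolding A using w by simp
  have Bp: "B > 0" unfolding B using w by simp
  have ahp: "ah > 0" using pb Ap by simp
  have bhp: "bh > 0" using pb Bp by simp
  have e0: "0 < \<epsilon>" unfolding \<epsilon>_def using h by simp
  have e1': "\<epsilon> \<le> 1" unfolding \<epsilon>_def using e1 .
  have cb: "4 * c + c * bh^2 / ah \<le> bh"
  proof -
    have "bh^2 \<le> B2^2" using pb bhp by (intro power_mono) auto
    moreover have "1 / ah \<le> 2 / A" using pb Ap ahp by (simp add: field_simps)
    ultimately have "bh^2 * (1 / ah) \<le> B2^2 * (2 / A)"
      using ahp by (intro mult_mono) auto
    then have "bh^2 / ah \<le> 2 * B2^2 / A" by (simp add: mult.commute)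
    then have "c * (bh^2 / ah) \<le> c * (2 * B2^2 / A)" using c0 by (intro mult_left_mono) auto
    then have "4 * c + c * bh^2 / ah \<le> c * (4 + 2 * B2^2 / A)" by (simp add: algebra_simps)
    also have "\<dots> \<le> B/2" by (rule c3)
    also have "\<dots> \<le> bh" using pb by simp
    finally show ?thesis .
  qed
  define X where "X = (\<lambda>k i. fst (mpc_state w1 w2 w3 h E alpha x0 v0 k i))"
  define U where "U = (\<lambda>k i. snd (mpc_state w1 w2 w3 h E alpha x0 v0 k i) / h)"
  define g where "g = (\<lambda>k i. ah * Lap (X k) i + bh * U k i)"
  define Xh where "Xh = (\<lambda>k i. X k i + \<epsilon> * U k i - \<epsilon>^2/2 * g k i)"
  define Uh where "Uh = (\<lambda>k i. U k i - \<epsilon> * g k i)"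
  define Fx where "Fx = (\<lambda>k i. - (1 - \<epsilon>^2 * ah / 2) * alpha (Suc k) i)"
  define Fu where "Fu = (\<lambda>k i. \<epsilon> * ah * alpha (Suc k) i)"
  have stepX: "X (Suc k) = (\<lambda>i. Xh k i + Fx k i)" for k
    using state_step(1)[OF w h den_def ah_def bh_def \<epsilon>_def X_def U_def]
    unfolding Xh_def Fx_def g_def by (auto simp: algebra_simps)
  have stepU: "U (Suc k) = (\<lambda>i. Uh k i + Fu k i)" for k
    using state_step(2)[OF w h den_def ah_def bh_def \<epsilon>_def X_def U_def]
    unfolding Uh_def Fu_def g_def by (auto simp: algebra_simps)
  define V where "V = (\<lambda>k. Vf ah c (X k) (U k))"
  define W where "W = (\<lambda>k. sqrt (V k))"
  have c2': "2 * c \<le> ah" using c2 pb by simp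
  have c1': "c \<le> 1" using c1 by simp
  have Vnn: "Vf ah c x u \<ge> 0" for x u using V_nonneg[of c ah x u] c0 c1' c2' by simp
  define \<theta> where "\<theta> = 1 - \<epsilon> * \<kappa> / (2 * (A + 2))"
  have th0: "0 \<le> \<theta>" unfolding \<theta>_def using e4 Ap unfolding \<epsilon>_def[symmetric] by (simp add: field_simps)
  have th1: "\<theta> < 1" unfolding \<theta>_def using e0 k0 Ap by simp
  have contr: "Vf ah c (Xh k) (Uh k) \<le> \<theta> * V k" for k
    unfolding Xh_def Uh_def V_def \<theta>_def
    by (rule contraction[OF g_def[THEN fun_cong[of _ _ k]] Ap pb(1,2) Bp pb(3,4) c0 c1 cb G gapG e0 e1' k0 k1 k2])
       (use e3 in \<open>simp add: \<epsilon>_def\<close>)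
  define \<rho> where "\<rho> = exp (- \<nu> * h)"
  have rho0: "0 < \<rho>" "\<rho> < 1" unfolding \<rho>_def using nu h by auto
  define Cf where "Cf = (A + 2) * (2 * (1 + A)^2 + A^2) * (\<Sum>i\<in>UNIV. deg i)"
  have Cf0: "Cf \<ge> 0" unfolding Cf_def using Ap deg_pos by (intro mult_nonneg_nonneg sum_nonneg) (auto simp: less_imp_le)
  have alk: "\<bar>alpha (Suc k) i\<bar> \<le> d * \<rho>^(Suc k)" for k i
  proof -
    have "- \<nu> * real (Suc k) * h = real (Suc k) * (- \<nu> * h)" by simp
    then have "exp (- \<nu> * real (Suc k) * h) = \<rho>^(Suc k)" unfolding \<rho>_def by (simp only: exp_of_nat_mult)
    moreover have "\<bar>alpha (Suc k) i\<bar> \<le> d * exp (- \<nu> * real (Suc k) * h)"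
      using al[rule_format, of "Suc k" i] by simp
    ultimately show ?thesis by simp
  qed
  have forc: "sqrt (Vf ah c (Fx k) (Fu k)) \<le> sqrt Cf * d * \<rho>^(Suc k)" for k
  proof -
    have "Vf ah c (Fx k) (Fu k) \<le> Cf * (d * \<rho>^(Suc k))^2"
      unfolding Fx_def Fu_def Cf_def
      by (rule forcing_bound) (use ahp pb c0 c1 e0 e1' d rho0 alk in \<open>auto simp: less_imp_le\<close>)
    then have "sqrt (Vf ah c (Fx k) (Fu k)) \<le> sqrt (Cf * (d * \<rho>^(Suc k))^2)" by (rule real_sqrt_le_mono)
    also have "\<dots> = sqrt Cf * d * \<rho>^(Suc k)" using d rho0 by (simp add: real_sqrt_mult)
    finally show ?thesis .
  qed
  have rec: "W (Suc k) \<le> sqrt \<theta> * W k + sqrt Cf * d * \<rho>^(Suc k)" for k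
  proof -
    have "W (Suc k) = sqrt (Vf ah c (\<lambda>i. Xh k i + Fx k i) (\<lambda>i. Uh k i + Fu k i))"
      unfolding W_def V_def stepX stepU ..
    also have "\<dots> \<le> sqrt (Vf ah c (Xh k) (Uh k)) + sqrt (Vf ah c (Fx k) (Fu k))"
      by (rule V_sqrt_triangle) (use c0 c1' c2' in auto)
    also have "sqrt (Vf ah c (Xh k) (Uh k)) \<le> sqrt (\<theta> * V k)" using contr by (rule real_sqrt_le_mono)
    also have "sqrt (\<theta> * V k) = sqrt \<theta> * W k" unfolding W_def by (simp add: real_sqrt_mult)
    finally show ?thesis using forc[of k] by linarith
  qed
  have W0: "W k \<ge> 0" for k unfolding W_def V_def using Vnn by simp
  obtain r0 M0 where r0: "0 < r0" "r0 < 1" "\<rho> \<le> r0" and M0: "M0 > 0" and WM: "\<forall>k. W k \<le> M0 * r0^k"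
    using geo_rec[of W "sqrt \<theta>" "sqrt Cf * d" \<rho>, OF W0 rec] th0 th1 rho0 Cf0 d
    by auto
  define m0 where "m0 = min (A/4) (1/2)"
  have m0: "m0 > 0" unfolding m0_def using Ap by simp
  have Vlow: "m0 * Qf (X k) \<le> V k \<and> m0 * ip (U k) (U k) \<le> V k" for k
  proof -
    have Q0: "Qf (X k) \<ge> 0" by (rule Qf_nonneg)
    have S0: "ip (U k) (U k) \<ge> 0" by (rule nq_nonneg)
    have a1: "m0 \<le> ah - 2 * c" unfolding m0_def using pb c2 by simp
    have a2: "m0 \<le> 1 - c" unfolding m0_def using c1 by simp
    have "V k \<ge> (ah - 2 * c) * Qf (X k) + (1 - c) * ip (U k) (U k)"
      unfolding V_def using V_lower c0 by simp
    moreover have "m0 * Qf (X k) \<le> (ah - 2 * c) * Qf (X k)" using a1 Q0 by (rule mult_right_mono)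
    moreover have "m0 * ip (U k) (U k) \<le> (1 - c) * ip (U k) (U k)" using a2 S0 by (rule mult_right_mono)
    moreover have "0 \<le> (ah - 2 * c) * Qf (X k)" using a1 m0 Q0 by simp
    moreover have "0 \<le> (1 - c) * ip (U k) (U k)" using a2 m0 S0 by simp
    ultimately show ?thesis by linarith
  qed
  obtain Kp where Kp0: "Kp \<ge> 0" and Kp: "\<And>f i j. \<bar>f i - f j\<bar> \<le> Kp * sqrt (2 * Qf f)"
    using exK by blast
  have dX: "\<bar>X k i - X k j\<bar> \<le> Kp * sqrt (2 / m0) * W k" for k i j
  proof -
    have "2 * Qf (X k) \<le> (2 / m0) * V k" using Vlow[of k] m0 by (simp add: field_simps)
    then have "sqrt (2 * Qf (X k)) \<le> sqrt ((2 / m0) * V k)" by (rule real_sqrt_le_mono)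
    also have "\<dots> = sqrt (2 / m0) * W k" unfolding W_def by (rule real_sqrt_mult)
    finally have "Kp * sqrt (2 * Qf (X k)) \<le> Kp * (sqrt (2 / m0) * W k)" using Kp0 by (rule mult_left_mono)
    then show ?thesis using Kp[of "X k" i j] by simp
  qed
  have dU: "\<bar>h * U k i\<bar> \<le> h / sqrt m0 * W k" for k i
  proof -
    have "(U k i)^2 \<le> ip (U k) (U k)" by (rule point_le)
    also have "\<dots> \<le> V k / m0" using Vlow[of k] m0 by (simp add: field_simps)
    finally have "sqrt ((U k i)^2) \<le> sqrt (V k / m0)" by (rule real_sqrt_le_mono)
    then have "\<bar>U k i\<bar> \<le> W k / sqrt m0" unfolding W_def by (simp add: real_sqrt_divide)
    then have "h * \<bar>U k i\<bar> \<le> h * (W k / sqrt m0)" using h by (intro mult_left_mono) auto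
    then show ?thesis using h by (simp add: abs_mult)
  qed
  define M1 where "M1 = Kp * sqrt (2 / m0) * M0 / r0 + 2 * d + 1"
  define Md where "Md = h * M0 / (sqrt m0 * r0) + 1"
  have M1p: "M1 > 0" unfolding M1_def using Kp0 M0 r0 d m0 by (simp add: add_nonneg_pos)
  have Mdp: "Md > 0" unfolding Md_def using h M0 r0 m0 by (simp add: add_nonneg_pos)
  have del: "mpc_delta0 w1 w2 w3 h E alpha x0 v0 (Suc k) i = X k i - alpha (Suc k) i" for k i
    unfolding mpc_delta0_def X_def by simp
  have ddel: "mpc_ddelta0 w1 w2 w3 h E alpha x0 v0 (Suc k) i = h * U k i" for k i
    unfolding mpc_ddelta0_def U_def using h by simp
  have rk: "r0^k = r0^(Suc k) / r0" for k using r0 by simp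
  have bnd1: "\<bar>mpc_delta0 w1 w2 w3 h E alpha x0 v0 k i - mpc_delta0 w1 w2 w3 h E alpha x0 v0 k j\<bar> \<le> M1 * r0 ^ k"
    if k: "k \<ge> 1" for k i j
  proof -
    obtain k' where kk: "k = Suc k'" using k by (cases k) auto
    have "\<bar>X k' i - alpha k i - (X k' j - alpha k j)\<bar> \<le> \<bar>X k' i - X k' j\<bar> + \<bar>alpha k i\<bar> + \<bar>alpha k j\<bar>"
      by simp
    also have "\<dots> \<le> Kp * sqrt (2 / m0) * (M0 * r0^k') + d * r0^k + d * r0^k"
    proof (intro add_mono)
      have "Kp * sqrt (2 / m0) * W k' \<le> Kp * sqrt (2 / m0) * (M0 * r0^k')"
        using WM Kp0 m0 by (intro mult_left_mono) auto
      then show "\<bar>X k' i - X k' j\<bar> \<le> Kp * sqrt (2 / m0) * (M0 * r0^k')" using dX[of k' i j] by linarith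
      have "\<rho>^k \<le> r0^k" using rho0 r0 by (intro power_mono) auto
      then have "d * \<rho>^k \<le> d * r0^k" using d by simp
      then show "\<bar>alpha k i\<bar> \<le> d * r0^k" "\<bar>alpha k j\<bar> \<le> d * r0^k"
        using alk[of k' i] alk[of k' j] unfolding kk by auto
    qed
    also have "\<dots> = (Kp * sqrt (2 / m0) * M0 / r0 + 2 * d) * r0^k"
      unfolding kk rk[of k'] using r0 by (simp add: field_simps)
    also have "\<dots> \<le> M1 * r0^k" unfolding M1_def using r0 by (intro mult_right_mono) auto
    finally show ?thesis unfolding kk del by simp
  qed
  have bnd2: "\<bar>mpc_ddelta0 w1 w2 w3 h E alpha x0 v0 k i\<bar> \<le> Md * r0 ^ k" if k: "k \<ge> 1" for k i
  proof -
    obtain k' where kk: "k = Suc k'" using k by (cases k) auto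
    have "\<bar>h * U k' i\<bar> \<le> h / sqrt m0 * (M0 * r0^k')"
      using dU[of k' i] WM h m0 mult_left_mono[of "W k'" "M0 * r0^k'" "h / sqrt m0"] by force
    also have "\<dots> = (h * M0 / (sqrt m0 * r0)) * r0^k"
      unfolding kk rk[of k'] using r0 m0 by (simp add: field_simps)
    also have "\<dots> \<le> Md * r0^k" unfolding Md_def using r0 by (intro mult_right_mono) auto
    finally show ?thesis unfolding kk ddel .
  qed
  show ?thesis
  proof (intro conjI allI)
    show "\<exists>r M Md. 0 < r \<and> r < 1 \<and> M > 0 \<and> Md > 0 \<and>
               (\<forall>k\<ge>1. \<forall>i j.
                  \<bar>mpc_delta0 w1 w2 w3 h E alpha x0 v0 k i - mpc_delta0 w1 w2 w3 h E alpha x0 v0 k j\<bar>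
                    \<le> M * r ^ k \<and>
                  \<bar>mpc_ddelta0 w1 w2 w3 h E alpha x0 v0 k i\<bar> \<le> Md * r ^ k)"
      using r0 M1p Mdp bnd1 bnd2 by blast
    fix i j
    show "(\<lambda>k. mpc_delta0 w1 w2 w3 h E alpha x0 v0 k i - mpc_delta0 w1 w2 w3 h E alpha x0 v0 k j) \<longlonglongrightarrow> 0"
      using bnd1 r0 by (intro lim_from_bound[where M = M1 and r = r0]) auto
  next
    fix i
    show "(\<lambda>k. mpc_ddelta0 w1 w2 w3 h E alpha x0 v0 k i) \<longlonglongrightarrow> 0"
      using bnd2 r0 by (intro lim_from_bound[where M = Md and r = r0]) auto
  qed
qed

end


theorem theorem1:
  fixes E :: "'a::finite \<Rightarrow> 'a \<Rightarrow> bool"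
    and w1 w2 w3 d \<nu> :: real
  assumes "CARD('a) \<ge> 2"
    and "\<And>i j. E i j \<Longrightarrow> E j i"
    and "\<And>i. \<not> E i i"
    and "\<And>i j. E\<^sup>*\<^sup>* i j"
    and "\<And>i. nbrs E i \<noteq> {}"
    and "w1 > 0" and "w2 > 0" and "w3 > 0" and "d > 0" and "\<nu> > 0"
  shows "\<exists>h0>0. \<forall>h. 0 < h \<and> h < h0 \<longrightarrow>
          (\<forall>(x0 :: 'a \<Rightarrow> real) (v0 :: 'a \<Rightarrow> real) (alpha :: nat \<Rightarrow> 'a \<Rightarrow> real).
            (\<forall>i. \<forall>k\<ge>1. \<bar>alpha k i\<bar> \<le> d * exp (- \<nu> * real k * h)) \<longrightarrow>
            (\<exists>r M Md. 0 < r \<and> r < 1 \<and> M > 0 \<and> Md > 0 \<and>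
               (\<forall>k\<ge>1. \<forall>i j.
                  \<bar>mpc_delta0 w1 w2 w3 h E alpha x0 v0 k i - mpc_delta0 w1 w2 w3 h E alpha x0 v0 k j\<bar>
                    \<le> M * r ^ k \<and>
                  \<bar>mpc_ddelta0 w1 w2 w3 h E alpha x0 v0 k i\<bar> \<le> Md * r ^ k)) \<and>
            (\<forall>i j. (\<lambda>k. mpc_delta0 w1 w2 w3 h E alpha x0 v0 k i - mpc_delta0 w1 w2 w3 h E alpha x0 v0 k j)
                      \<longlonglongrightarrow> 0) \<and>
            (\<forall>i. (\<lambda>k. mpc_ddelta0 w1 w2 w3 h E alpha x0 v0 k i) \<longlonglongrightarrow> 0))"
proof -
  note w = assms(6,7,8)
  interpret grph E
    by unfold_locales (use assms(2,4,5) in auto)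
  obtain G where G: "G > 0" and gapG: "\<And>f. Qf f \<le> G * ip (Lap f) (Lap f)"
    using gap by blast
  define A where "A = w1 / (2 * w3)"
  define B where "B = w2 / w3"
  define B2 where "B2 = (w2 + w1) / w3"
  have Ap: "A > 0" unfolding A_def using w by simp
  have Bp: "B > 0" unfolding B_def using w by simp
  define q where "q = 4 + 2 * B2^2 / A"
  have qp: "q > 0" unfolding q_def using Ap by (simp add: add_pos_nonneg)
  define c where "c = min (min (A/8) (1/2)) ((B/2) / q)"
  have c0: "c > 0" unfolding c_def using Ap Bp qp by simp
  have c1: "c \<le> 1/2" "c \<le> A/8" unfolding c_def by auto
  have c3: "c * (4 + 2 * B2^2 / A) \<le> B/2"
  proof -
    have "c \<le> (B/2) / q" unfolding c_def by simp
    then have "c * q \<le> B/2" using qp by (simp add: le_divide_eq)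
    then show ?thesis unfolding q_def .
  qed
  define \<kappa> where "\<kappa> = min (c * A / (2 * G)) (B/2)"
  have k0: "\<kappa> > 0" unfolding \<kappa>_def using c0 Ap G Bp by simp
  have k12: "\<kappa> \<le> c * A / (2 * G)" "\<kappa> \<le> B/2" unfolding \<kappa>_def by auto
  define R where "R = 5 * (A + 1) * (4 * A^2 + 2 * B2^2 + 4)"
  have Rp: "R > 0" unfolding R_def using Ap by (simp add: add_pos_nonneg)
  define h0 where "h0 = min (min 1 (w3 / (w2 + w1))) (min (\<kappa> / (2 * R)) ((A + 2) / \<kappa>))"
  have h0p: "h0 > 0" unfolding h0_def using w k0 Rp Ap by simp
  show ?thesis
  proof (rule exI[of _ h0], rule conjI[OF h0p], intro allI impI)
    fix h :: real and x0 v0 :: "'a \<Rightarrow> real" and alpha :: "nat \<Rightarrow> 'a \<Rightarrow> real"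
    assume hh: "0 < h \<and> h < h0"
    assume al: "\<forall>i. \<forall>k\<ge>1. \<bar>alpha k i\<bar> \<le> d * exp (- \<nu> * real k * h)"
    have h: "h > 0" using hh by simp
    have hlt: "h < 1" using hh unfolding h0_def by simp
    have h2h: "h^2 \<le> h" using h hlt by (simp add: power2_eq_square mult_le_cancel_right1 less_imp_le)
    have h2: "h^2 < h0" using h2h hh by simp
    have e1: "h^2 \<le> 1" using h2h hlt by simp
    have e2: "h^2 \<le> w3 / (w2 + w1)" using h2 unfolding h0_def by simp
    have e3: "h^2 * (5 * (A + 1) * (4 * A^2 + 2 * B2^2 + 4)) \<le> \<kappa> / 2"
    proof -
      have "h^2 \<le> \<kappa> / (2 * R)" using h2 unfolding h0_def by simp
      then have "h^2 * R \<le> \<kappa> / 2" using Rp by (simp add: le_divide_eq mult.commute)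
      then show ?thesis unfolding R_def .
    qed
    have e4: "h^2 * \<kappa> < A + 2"
    proof -
      have "h^2 < (A + 2) / \<kappa>" using h2 unfolding h0_def by simp
      then show ?thesis using k0 by (simp add: less_divide_eq)
    qed
    show "(\<exists>r M Md. 0 < r \<and> r < 1 \<and> M > 0 \<and> Md > 0 \<and>
               (\<forall>k\<ge>1. \<forall>i j.
                  \<bar>mpc_delta0 w1 w2 w3 h E alpha x0 v0 k i - mpc_delta0 w1 w2 w3 h E alpha x0 v0 k j\<bar>
                    \<le> M * r ^ k \<and>
                  \<bar>mpc_ddelta0 w1 w2 w3 h E alpha x0 v0 k i\<bar> \<le> Md * r ^ k)) \<and>
            (\<forall>i j. (\<lambda>k. mpc_delta0 w1 w2 w3 h E alpha x0 v0 k i - mpc_delta0 w1 w2 w3 h E alpha x0 v0 k j)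
                      \<longlonglongrightarrow> 0) \<and>
            (\<forall>i. (\<lambda>k. mpc_ddelta0 w1 w2 w3 h E alpha x0 v0 k i) \<longlonglongrightarrow> 0)"
      by (rule main_h[OF w assms(9,10) h G gapG A_def B_def B2_def c0 c1(1) c1(2) c3 k0 k12 e1 e2 e3 e4 al])
  qed
qed

end
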